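(* Let $d_d=2t_d+1$ with $t_d\ge0$, let $f:\mathbb{F}_q^k\to\mathrm{Im}(f)$ be a $d_d$-locally binary function with $|\mathrm{Im}(f)|\ge2$, and suppose there exists a perfect linear $[n,k,d_d]$ code over $\mathbb{F}_q$, i.e. $\sum_{i=0}^{t_d}\binom{n}{i}(q-1)^i=q^{n-k}$. Then $r_f(k:d_d,d_d+1)=n-k+1$.
   Context: $d(\cdot,\cdot)$ is Hamming distance. $B_f(u,\rho)=\{f(u'):d(u,u')\le\rho\}$; $f$ is $\rho$-locally binary if $|B_f(u,\rho)|\le2$ for all $u$. For integers $0\le d_d\le d_f$, an $(f\!:d_d,d_f)$-FCC with redundancy $r$ is a systematic encoding $\mathfrak{C}_f(u)=(u,p_u)\in\mathbb{F}_q^{k+r}$ with $d(\mathfrak{C}_f(u_1),\mathfrak{C}_f(u_2))\ge d_d$ whenever $u_1\ne u_2$ and $\ge d_f$ whenever $f(u_1)\ne f(u_2)$; $r_f(k:d_d,d_f)$ is the minimum such $r$. *)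

theory Defs
  imports Main
begin

text \<open>Vectors over F_q are lists over a finite field type 'a; F_q^k = vectors k.\<close>

definition vectors :: "nat \<Rightarrow> 'a list set" where
  "vectors k = {u. length u = k}"

definition hamming :: "'a list \<Rightarrow> 'a list \<Rightarrow> nat" where
  "hamming x y = card {i. i < length x \<and> i < length y \<and> x ! i \<noteq> y ! i}"

definition fball :: "nat \<Rightarrow> ('a list \<Rightarrow> 'b) \<Rightarrow> 'a list \<Rightarrow> nat \<Rightarrow> 'b set" where
  "fball k f u \<rho> = {f u' | u'. u' \<in> vectors k \<and> hamming u u' \<le> \<rho>}"

definition locally_binary :: "nat \<Rightarrow> ('a list \<Rightarrow> 'b) \<Rightarrow> nat \<Rightarrow> bool" where
  "locally_binary k f \<rho> \<longleftrightarrow> (\<forall>u \<in> vectors k. card (fball k f u \<rho>) \<le> 2)"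

text \<open>An (f:dd,df)-FCC with redundancy r: systematic encoding u \<mapsto> (u, p u).\<close>
definition is_FCC :: "nat \<Rightarrow> ('a list \<Rightarrow> 'b) \<Rightarrow> nat \<Rightarrow> nat \<Rightarrow> nat \<Rightarrow> ('a list \<Rightarrow> 'a list) \<Rightarrow> bool" where
  "is_FCC k f dd df r p \<longleftrightarrow>
     (\<forall>u \<in> vectors k. length (p u) = r) \<and>
     (\<forall>u1 \<in> vectors k. \<forall>u2 \<in> vectors k.
        (u1 \<noteq> u2 \<longrightarrow> hamming (u1 @ p u1) (u2 @ p u2) \<ge> dd) \<and>
        (f u1 \<noteq> f u2 \<longrightarrow> hamming (u1 @ p u1) (u2 @ p u2) \<ge> df))"

definition min_redundancy :: "'a itself \<Rightarrow> nat \<Rightarrow> ('a list \<Rightarrow> 'b) \<Rightarrow> nat \<Rightarrow> nat \<Rightarrow> nat" where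
  "min_redundancy _ k f dd df = (LEAST r. \<exists>p :: 'a list \<Rightarrow> 'a list. is_FCC k f dd df r p)"

text \<open>Linear [n,k,d] code over the field 'a: a subspace of F_q^n of dimension k
  (equivalently, cardinality q^k) with minimum distance d.\<close>
definition linear_code :: "nat \<Rightarrow> nat \<Rightarrow> nat \<Rightarrow> ('a::{finite,field}) list set \<Rightarrow> bool" where
  "linear_code n k d C \<longleftrightarrow>
     C \<subseteq> vectors n \<and> replicate n 0 \<in> C \<and>
     (\<forall>x \<in> C. \<forall>y \<in> C. map2 (+) x y \<in> C) \<and>
     (\<forall>c. \<forall>x \<in> C. map ((*) c) x \<in> C) \<and>
     card C = card (UNIV :: 'a set) ^ k \<and>
     (\<exists>x \<in> C. \<exists>y \<in> C. x \<noteq> y \<and> hamming x y = d) \<and>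
     (\<forall>x \<in> C. \<forall>y \<in> C. x \<noteq> y \<longrightarrow> hamming x y \<ge> d)"

text \<open>Perfect: the balls of radius t = (d-1)/2 around codewords tile F_q^n,
  i.e. the sphere-packing bound is attained.\<close>
definition perfect_linear_code :: "nat \<Rightarrow> nat \<Rightarrow> nat \<Rightarrow> ('a::{finite,field}) list set \<Rightarrow> bool" where
  "perfect_linear_code n k d C \<longleftrightarrow> linear_code n k d C \<and>
     (\<Sum>i=0..(d - 1) div 2. (n choose i) * (card (UNIV :: 'a set) - 1) ^ i) = card (UNIV :: 'a set) ^ (n - k)"

end

theory Submission
  imports Defs "HOL-Library.FuncSet"
begin

lemma hamming_Nil[simp]: "hamming [] ys = 0" "hamming xs [] = 0"
  by (auto simp: hamming_def)

lemma hamming_Cons: "hamming (x#xs) (y#ys) = (if x = y then 0 else 1) + hamming xs ys"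
proof -
  have e: "{i. i < length (x#xs) \<and> i < length (y#ys) \<and> (x#xs)!i \<noteq> (y#ys)!i}
     = (if x \<noteq> y then {0} else {}) \<union> Suc ` {i. i < length xs \<and> i < length ys \<and> xs!i \<noteq> ys!i}"
    apply (rule set_eqI)
    subgoal for i by (cases i) auto
    done
  have f: "finite {i. i < length xs \<and> i < length ys \<and> xs!i \<noteq> ys!i}" by auto
  show ?thesis unfolding hamming_def e
    using f by (auto simp: card_image)
qed

lemma hamming_append: "length xs = length ys \<Longrightarrow> hamming (xs @ xs') (ys @ ys') = hamming xs ys + hamming xs' ys'"
  by (induction xs ys rule: list_induct2) (auto simp: hamming_Cons)

lemma hamming_set: "length x = length y \<Longrightarrow> hamming x y = card {i. i < length x \<and> x!i \<noteq> y!i}"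
  unfolding hamming_def by simp

lemma hamming_sym: "hamming x y = hamming y x"
  unfolding hamming_def by (metis (full_types))

lemma hamming_self[simp]: "hamming x x = 0"
  unfolding hamming_def by simp

lemma hamming_0_iff: "length x = length y \<Longrightarrow> hamming x y = 0 \<longleftrightarrow> x = y"
  unfolding hamming_set by (auto intro: nth_equalityI)

lemma hamming_triangle:
  assumes "length x = length y" "length y = length z"
  shows "hamming x z \<le> hamming x y + hamming y z"
proof -
  have "{i. i < length x \<and> x!i \<noteq> z!i} \<subseteq> {i. i < length x \<and> x!i \<noteq> y!i} \<union> {i. i < length y \<and> y!i \<noteq> z!i}"
    using assms by auto
  then have "card {i. i < length x \<and> x!i \<noteq> z!i} \<le> card ({i. i < length x \<and> x!i \<noteq> y!i} \<union> {i. i < length y \<and> y!i \<noteq> z!i})"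
    by (intro card_mono) auto
  also have "\<dots> \<le> card {i. i < length x \<and> x!i \<noteq> y!i} + card {i. i < length y \<and> y!i \<noteq> z!i}"
    by (rule card_Un_le)
  finally show ?thesis using assms by (simp add: hamming_set)
qed

lemma hamming_update_le: "hamming y (y[i := a]) \<le> 1"
proof -
  have "{j. j < length y \<and> j < length (y[i:=a]) \<and> y!j \<noteq> y[i:=a]!j} \<subseteq> {i}"
  proof (rule subsetI)
    fix j assume "j \<in> {j. j < length y \<and> j < length (y[i:=a]) \<and> y!j \<noteq> y[i:=a]!j}"
    then have "y!j \<noteq> y[i:=a]!j" by simp
    then show "j \<in> {i}" by (cases "j = i") auto
  qed
  then show ?thesis unfolding hamming_def
    using card_mono[of "{i}"] by fastforce
qed

lemma hamming_update_dec:
  assumes "length y = length z" "i < length y" "y!i \<noteq> z!i"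
  shows "hamming (y[i := z!i]) z = hamming y z - 1"
proof -
  have "{j. j < length y \<and> y[i := z!i]!j \<noteq> z!j} = {j. j < length y \<and> y!j \<noteq> z!j} - {i}"
    using assms by (auto simp: nth_list_update)
  then show ?thesis using assms by (simp add: hamming_set)
qed

lemma hamming_map_perm:
  assumes "distinct L" "set L = {..<n}" "length x = n" "length y = n"
  shows "hamming (map ((!) x) L) (map ((!) y) L) = hamming x y"
proof -
  have ln: "length L = n" using assms distinct_card by fastforce
  have "{j. j < length L \<and> x!(L!j) \<noteq> y!(L!j)} = {j. j < n \<and> x!(L!j) \<noteq> y!(L!j)}" using ln by simp
  have img: "(!) L ` {j. j < n \<and> x!(L!j) \<noteq> y!(L!j)} = {i. i < n \<and> x!i \<noteq> y!i}"
  proof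
    show "(!) L ` {j. j < n \<and> x ! (L ! j) \<noteq> y ! (L ! j)} \<subseteq> {i. i < n \<and> x ! i \<noteq> y ! i}"
      using assms ln nth_mem by fastforce
    show "{i. i < n \<and> x ! i \<noteq> y ! i} \<subseteq> (!) L ` {j. j < n \<and> x ! (L ! j) \<noteq> y ! (L ! j)}"
    proof
      fix i assume "i \<in> {i. i < n \<and> x ! i \<noteq> y ! i}"
      then have "i \<in> set L" using assms by auto
      then obtain j where "j < length L" "L!j = i" by (auto simp: in_set_conv_nth)
      then show "i \<in> (!) L ` {j. j < n \<and> x ! (L ! j) \<noteq> y ! (L ! j)}"
        using \<open>i \<in> {i. i < n \<and> x ! i \<noteq> y ! i}\<close> ln by auto
    qed
  qed
  have inj: "inj_on ((!) L) {j. j < n \<and> x!(L!j) \<noteq> y!(L!j)}"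
    using assms(1) ln by (auto simp: inj_on_def nth_eq_iff_index_eq)
  have "{i. i < n \<and> map ((!) x) L ! i \<noteq> map ((!) y) L ! i} = {j. j < n \<and> x!(L!j) \<noteq> y!(L!j)}"
    using ln by auto
  then show ?thesis using assms ln
    by (simp add: hamming_set card_image[OF inj, symmetric] img)
qed

fun V :: "nat \<Rightarrow> nat \<Rightarrow> nat \<Rightarrow> nat" where
  "V q 0 t = 1"
| "V q (Suc m) t = V q m t + (if t = 0 then 0 else (q - 1) * V q m (t - 1))"

lemma V_sum: "V q m t = (\<Sum>i=0..t. (m choose i) * (q - 1) ^ i)"
proof (induction m arbitrary: t)
  case 0
  then show ?case by (simp add: sum.atLeast_Suc_atMost[of 0 t, simplified])
next
  case (Suc m)
  show ?case
  proof (cases t)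
    case 0
    then show ?thesis using Suc by simp
  next
    case (Suc s)
    have "(\<Sum>i=0..Suc s. (Suc m choose i) * (q - 1) ^ i)
        = (Suc m choose 0) * (q - 1) ^ 0 + (\<Sum>i=0..s. (Suc m choose Suc i) * (q - 1) ^ Suc i)"
      by (simp only: sum.atLeast0_atMost_Suc_shift o_def)
    also have "\<dots> = 1 + (\<Sum>i=0..s. (Suc m choose Suc i) * (q - 1) ^ Suc i)" by simp
    also have "\<dots> = 1 + (\<Sum>i=0..s. (m choose i) * (q - 1) ^ Suc i) + (\<Sum>i=0..s. (m choose Suc i) * (q - 1) ^ Suc i)"
      by (simp only: binomial_Suc_Suc add_mult_distrib sum.distrib add.assoc)
    finally have e0: "(\<Sum>i=0..Suc s. (Suc m choose i) * (q - 1) ^ i) = 1 + (\<Sum>i=0..s. (m choose i) * (q - 1) ^ Suc i) + (\<Sum>i=0..s. (m choose Suc i) * (q - 1) ^ Suc i)" .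
    have eA: "(\<Sum>i=0..s. (m choose i) * (q - 1) ^ Suc i) = (q - 1) * V q m s"
      using Suc.IH[of s] by (simp add: sum_distrib_left algebra_simps)
    have eB: "1 + (\<Sum>i=0..s. (m choose Suc i) * (q - 1) ^ Suc i) = V q m (Suc s)"
      using sum.atLeast0_atMost_Suc_shift[of "\<lambda>i. (m choose i) * (q - 1) ^ i" s] Suc.IH[of "Suc s"] by simp
    have "(\<Sum>i=0..Suc s. (Suc m choose i) * (q - 1) ^ i) = V q m (Suc s) + (q - 1) * V q m s"
      using e0 eA eB by simp
    then show ?thesis using Suc by simp
  qed
qed

lemma V_mono: "s \<le> t \<Longrightarrow> V q m s \<le> V q m t"
  unfolding V_sum by (intro sum_mono2) auto

lemma V_Suc_le: "q \<ge> 1 \<Longrightarrow> V q (Suc m) t \<le> q * V q m t"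
proof -
  assume q: "q \<ge> 1"
  have "V q m (t - 1) \<le> V q m t" by (rule V_mono) simp
  then have "(q - 1) * V q m (t - 1) \<le> (q - 1) * V q m t" by simp
  then have "V q (Suc m) t \<le> V q m t + (q - 1) * V q m t" by simp
  also have "\<dots> = q * V q m t" using q by (simp add: algebra_simps)
  finally show ?thesis .
qed

lemma V_add_le: "q \<ge> 1 \<Longrightarrow> V q (m + j) t \<le> q ^ j * V q m t"
proof (induction j)
  case 0 then show ?case by simp
next
  case (Suc j)
  have "V q (m + Suc j) t \<le> q * V q (m + j) t" using V_Suc_le[OF Suc.prems] by simp
  also have "\<dots> \<le> q * (q ^ j * V q m t)" using Suc by simp
  finally show ?case by simp
qed

lemma hamming_Cons_le: "hamming (x#xs) (b#ys) \<le> t \<longleftrightarrow>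
   (b = x \<and> hamming xs ys \<le> t) \<or> (b \<noteq> x \<and> t \<ge> 1 \<and> hamming xs ys \<le> t - 1)"
  by (auto simp: hamming_Cons)

lemma ball_card:
  fixes x :: "'a::finite list"
  shows "card {y. length y = length x \<and> hamming x y \<le> t} = V (card (UNIV :: 'a set)) (length x) t"
proof (induction x arbitrary: t)
  case Nil
  have "{y::'a list. length y = 0 \<and> hamming [] y \<le> t} = {[]}" by auto
  then show ?case by simp
next
  case (Cons x xs)
  define B where "B s = {y::'a list. length y = length xs \<and> hamming xs y \<le> s}" for s
  have fin: "finite (B s)" for s
  proof -
    have "B s \<subseteq> {y. set y \<subseteq> UNIV \<and> length y = length xs}" unfolding B_def by auto
    then show ?thesis by (rule finite_subset) (use finite_lists_length_eq[of "UNIV::'a set" "length xs"] in simp)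
  qed
  define S2 where "S2 = (\<lambda>(a, ys). a # ys) ` ((UNIV - {x}) \<times> B (t - 1))"
  have eq: "{y. length y = length (x#xs) \<and> hamming (x#xs) y \<le> t}
     = (Cons x) ` B t \<union> (if t = 0 then {} else S2)"
  proof (rule set_eqI)
    fix y
    show "y \<in> {y. length y = length (x#xs) \<and> hamming (x#xs) y \<le> t} \<longleftrightarrow>
          y \<in> (Cons x) ` B t \<union> (if t = 0 then {} else S2)"
    proof (cases y)
      case Nil then show ?thesis by (auto simp: S2_def)
    next
      case (Cons b ys)
      then show ?thesis by (auto simp: hamming_Cons B_def S2_def image_iff split: if_splits)
    qed
  qed
  have c1: "card ((Cons x) ` B t) = card (B t)" by (simp add: card_image)
  have inj2: "inj_on (\<lambda>(a, ys). a # ys) ((UNIV - {x}) \<times> B (t - 1))" by (auto simp: inj_on_def)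
  have c2: "card S2 = (card (UNIV :: 'a set) - 1) * card (B (t - 1))"
  proof -
    have "card S2 = card ((UNIV - {x}) \<times> B (t - 1))" unfolding S2_def by (rule card_image[OF inj2])
    also have "\<dots> = card (UNIV - {x}) * card (B (t - 1))" by (rule card_cartesian_product)
    also have "card (UNIV - {x}) = card (UNIV :: 'a set) - 1" by (simp add: card_Diff_singleton)
    finally show ?thesis .
  qed
  have disj: "(Cons x) ` B t \<inter> S2 = {}" by (auto simp: S2_def)
  have finS2: "finite S2" unfolding S2_def using fin by auto
  have "card {y. length y = length (x#xs) \<and> hamming (x#xs) y \<le> t}
       = card (B t) + (if t = 0 then 0 else (card (UNIV :: 'a set) - 1) * card (B (t - 1)))"
    unfolding eq using fin finS2 disj c1 c2 by (simp add: card_Un_disjoint)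
  then show ?case using Cons.IH unfolding B_def by simp
qed

lemma card_vectors: "card (vectors k :: 'a::finite list set) = card (UNIV :: 'a set) ^ k"
  using card_lists_length_eq[of "UNIV :: 'a set" k] by (simp add: vectors_def)

lemma finite_vectors: "finite (vectors k :: 'a::finite list set)"
  using finite_lists_length_eq[of "UNIV :: 'a set" k] by (simp add: vectors_def)

lemma card_field_ge2: "card (UNIV :: 'a::{finite,field} set) \<ge> 2"
proof -
  have "card {0, 1 :: 'a} = 2" by simp
  moreover have "card {0, 1 :: 'a} \<le> card (UNIV :: 'a set)" by (rule card_mono) auto
  ultimately show ?thesis by simp
qed

lemma lower_bound:
  fixes f :: "('a::{finite,field}) list \<Rightarrow> 'b" and p :: "'a list \<Rightarrow> 'a list"
  assumes dd: "d = 2 * t + 1"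
    and fcc: "is_FCC k f d (d + 1) r p"
    and nc: "card (f ` vectors k) \<ge> 2"
    and Vn: "V (card (UNIV :: 'a set)) n t = card (UNIV :: 'a set) ^ (n - k)"
    and r: "k + r \<le> n"
  shows False
proof -
  define q where "q = card (UNIV :: 'a set)"
  have q2: "q \<ge> 2" unfolding q_def by (rule card_field_ge2)
  define m where "m = k + r"
  define c where "c u = u @ p u" for u :: "'a list"
  have lenp: "\<And>u. u \<in> vectors k \<Longrightarrow> length (p u) = r" using fcc unfolding is_FCC_def by blast
  have lenc: "\<And>u. u \<in> vectors k \<Longrightarrow> length (c u) = m"
    using lenp unfolding c_def m_def vectors_def by auto
  have key: "\<And>u u'. u \<in> vectors k \<Longrightarrow> u' \<in> vectors k \<Longrightarrow> hamming (c u) (c u') \<le> d \<Longrightarrow> f u = f u'"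
    using fcc unfolding is_FCC_def c_def by fastforce
  have dist: "\<And>u u'. u \<in> vectors k \<Longrightarrow> u' \<in> vectors k \<Longrightarrow> u \<noteq> u' \<Longrightarrow> hamming (c u) (c u') \<ge> d"
    using fcc unfolding is_FCC_def c_def by blast
  define Ball where "Ball u = {y. length y = m \<and> hamming (c u) y \<le> t}" for u
  have cardB: "card (Ball u) = V q m t" if "u \<in> vectors k" for u
    using ball_card[of "c u" t] lenc[OF that] unfolding Ball_def q_def by simp
  have BallV: "Ball u \<subseteq> vectors m" for u unfolding Ball_def vectors_def by auto
  have finB: "finite (Ball u)" for u using BallV finite_vectors finite_subset by metis
  have disj: "Ball u \<inter> Ball u' = {}" if "u \<in> vectors k" "u' \<in> vectors k" "u \<noteq> u'" for u u'
  proof (rule ccontr)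
    assume "Ball u \<inter> Ball u' \<noteq> {}"
    then obtain y where y: "y \<in> Ball u" "y \<in> Ball u'" by blast
    have "hamming (c u) (c u') \<le> hamming (c u) y + hamming y (c u')"
      using y lenc that by (intro hamming_triangle) (auto simp: Ball_def)
    also have "\<dots> \<le> 2 * t" using y by (auto simp: Ball_def hamming_sym)
    finally show False using dist[OF that] dd by simp
  qed
  have cardU: "card (\<Union>u\<in>vectors k. Ball u) = q ^ k * V q m t"
  proof -
    have "card (\<Union>u\<in>vectors k. Ball u) = (\<Sum>u\<in>vectors k. card (Ball u))"
      using disj finB finite_vectors by (intro card_UN_disjoint) auto
    also have "\<dots> = (\<Sum>u\<in>(vectors k :: 'a list set). V q m t)" using cardB by simp
    also have "\<dots> = card (vectors k :: 'a list set) * V q m t" by simp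
    also have "\<dots> = q ^ k * V q m t" unfolding q_def card_vectors ..
    finally show ?thesis .
  qed
  have "V q n t \<le> q ^ (n - m) * V q m t"
    using V_add_le[of q m "n - m" t] q2 r unfolding m_def by simp
  then have "q ^ (n - k) \<le> q ^ (n - m) * V q m t" using Vn unfolding q_def by simp
  then have "q ^ (n - k) * q ^ k \<le> q ^ (n - m) * (q ^ k * V q m t)" by (simp add: mult_le_mono1 algebra_simps)
  moreover have "q ^ (n - k) * q ^ k = q ^ (n - m) * q ^ m"
    using r unfolding m_def by (simp add: power_add[symmetric])
  ultimately have "q ^ (n - m) * q ^ m \<le> q ^ (n - m) * (q ^ k * V q m t)" by simp
  then have ge: "q ^ m \<le> q ^ k * V q m t" using q2 by simp
  have Usub: "(\<Union>u\<in>vectors k. Ball u) \<subseteq> vectors m" using BallV by auto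
  have "card (vectors m :: 'a list set) = q ^ m" unfolding q_def by (rule card_vectors)
  then have Ueq: "(\<Union>u\<in>vectors k. Ball u) = vectors m"
    using Usub ge cardU card_mono[OF finite_vectors Usub] finite_vectors
    by (intro card_subset_eq) auto
  have cover: "\<exists>u\<in>vectors k. hamming (c u) y \<le> t" if "length y = m" for y
  proof -
    have "y \<in> vectors m" using that by (simp add: vectors_def)
    then show ?thesis unfolding Ueq[symmetric] Ball_def by auto
  qed
  define u0 where "u0 = (replicate k 0 :: 'a list)"
  have u0: "u0 \<in> vectors k" unfolding u0_def vectors_def by simp
  have claim: "\<forall>y. length y = m \<longrightarrow> hamming y (c u0) = j \<longrightarrow>
      (\<forall>u\<in>vectors k. hamming (c u) y \<le> t \<longrightarrow> f u = f u0)" for j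
  proof (induction j)
    case 0
    show ?case
    proof (intro allI impI ballI)
      fix y u assume y: "length y = m" "hamming y (c u0) = 0" and u: "u \<in> vectors k" "hamming (c u) y \<le> t"
      have "y = c u0" using y lenc[OF u0] hamming_0_iff by metis
      then show "f u = f u0" using key[OF u(1) u0] u dd by simp
    qed
  next
    case (Suc j)
    show ?case
    proof (intro allI impI ballI)
      fix y u assume y: "length y = m" "hamming y (c u0) = Suc j" and u: "u \<in> vectors k" "hamming (c u) y \<le> t"
      have "card {i. i < length y \<and> y!i \<noteq> c u0 ! i} = Suc j"
        using y lenc[OF u0] by (simp add: hamming_set)
      then have "{i. i < length y \<and> y!i \<noteq> c u0 ! i} \<noteq> {}"
        by (metis card.empty nat.distinct(1))
      then obtain i where i: "i < length y" "y!i \<noteq> c u0 ! i" by blast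
      define y' where "y' = y[i := c u0 ! i]"
      have ly': "length y' = m" using y unfolding y'_def by simp
      have hy': "hamming y' (c u0) = j" using hamming_update_dec[of y "c u0" i] i y lenc[OF u0]
        unfolding y'_def by simp
      obtain u' where u': "u' \<in> vectors k" "hamming (c u') y' \<le> t" using cover[OF ly'] by blast
      have fu': "f u' = f u0" using Suc.IH ly' hy' u' by blast
      have "hamming (c u) (c u') \<le> hamming (c u) y + hamming y (c u')"
        using lenc u u' y by (intro hamming_triangle) auto
      also have "hamming y (c u') \<le> hamming y y' + hamming y' (c u')"
        using lenc u u' y ly' by (intro hamming_triangle) auto
      also have "hamming y y' \<le> 1" unfolding y'_def by (rule hamming_update_le)
      finally have "hamming (c u) (c u') \<le> hamming (c u) y + (1 + hamming y' (c u'))" by simp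
      then have "hamming (c u) (c u') \<le> d" using u u' dd by (simp add: hamming_sym)
      then show "f u = f u0" using key[OF u(1) u'(1)] fu' by simp
    qed
  qed
  have "\<forall>u\<in>vectors k. f u = f u0"
  proof
    fix u :: "'a list" assume u: "u \<in> vectors k"
    have h0: "hamming (c u) (c u) \<le> t" by simp
    show "f u = f u0" using claim[of "hamming (c u) (c u0)", rule_format, OF lenc[OF u] refl u h0] .
  qed
  then have "f ` vectors k \<subseteq> {f u0}" by blast
  then have "card (f ` vectors k) \<le> 1" using card_mono[of "{f u0}" "f ` vectors k"] by simp
  then show False using nc by simp
qed

lemma info_set:
  fixes C :: "('a::{finite,field}) list set"
  assumes lin: "linear_code n k d C"
  shows "\<exists>I \<subseteq> {..<n}. card I = k \<and> inj_on (\<lambda>c. restrict ((!) c) I) C"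
proof -
  define q where "q = card (UNIV :: 'a set)"
  have q2: "q \<ge> 2" unfolding q_def by (rule card_field_ge2)
  have Cn: "\<And>c. c \<in> C \<Longrightarrow> length c = n" using lin unfolding linear_code_def vectors_def by auto
  have add: "\<And>x y. x \<in> C \<Longrightarrow> y \<in> C \<Longrightarrow> map2 (+) x y \<in> C" using lin unfolding linear_code_def by blast
  have smul: "\<And>a x. x \<in> C \<Longrightarrow> map ((*) a) x \<in> C" using lin unfolding linear_code_def by blast
  have zero: "replicate n 0 \<in> C" using lin unfolding linear_code_def by blast
  have cardC: "card C = q ^ k" using lin unfolding linear_code_def q_def by blast
  define R where "R I c = restrict ((!) c) I" for I and c :: "'a list"
  define F where "F = {I. I \<subseteq> {..<n} \<and> R I ` C = PiE I (\<lambda>_. UNIV)}"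
  have finF: "finite F" unfolding F_def by (rule finite_subset[of _ "Pow {..<n}"]) auto
  have r0: "R {} (replicate n 0) = (\<lambda>x. undefined)" unfolding R_def by (rule ext) simp
  have "R {} ` C = PiE {} (\<lambda>_. UNIV)"
  proof
    show "R {} ` C \<subseteq> PiE {} (\<lambda>_. UNIV)" unfolding R_def by auto
    show "PiE {} (\<lambda>_. UNIV) \<subseteq> R {} ` C" using zero r0 by (auto intro: rev_image_eqI)
  qed
  then have "{} \<in> F" unfolding F_def by auto
  then have Fne: "F \<noteq> {}" by blast
  define I where "I = (SOME I. I \<in> F \<and> card I = Max (card ` F))"
  have "\<exists>I. I \<in> F \<and> card I = Max (card ` F)"
  proof -
    have "Max (card ` F) \<in> card ` F" using Max_in[of "card ` F"] finF Fne by blast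
    then show ?thesis by (metis imageE)
  qed
  then have IF: "I \<in> F" and Imax: "card I = Max (card ` F)" unfolding I_def by (metis (mono_tags, lifting) someI_ex)+
  have Isub: "I \<subseteq> {..<n}" and Isurj: "R I ` C = PiE I (\<lambda>_. UNIV)" using IF unfolding F_def by auto
  have finI: "finite I" using Isub finite_subset by blast
  have maxI: "\<And>J. J \<in> F \<Longrightarrow> card J \<le> card I" using Imax finF by simp
  have det: "c ! j = c' ! j" if j: "j < n" "j \<notin> I" and cc: "c \<in> C" "c' \<in> C" "R I c = R I c'" for j c c'
  proof (rule ccontr)
    assume neq: "c ! j \<noteq> c' ! j"
    have agree: "\<And>i. i \<in> I \<Longrightarrow> c ! i = c' ! i"
      using cc(3) unfolding R_def by (metis restrict_apply')
    define v where "v = map2 (+) c (map ((*) (-1)) c')"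
    have vC: "v \<in> C" unfolding v_def using add smul cc by blast
    have lv: "length v = n" using Cn cc unfolding v_def by simp
    have vnth: "\<And>i. i < n \<Longrightarrow> v ! i = c ! i - c' ! i" using Cn cc unfolding v_def by simp
    have v0: "\<And>i. i \<in> I \<Longrightarrow> v ! i = 0" using vnth agree Isub by auto
    have vj: "v ! j \<noteq> 0" using vnth[OF j(1)] neq by simp
    have "R (insert j I) ` C = PiE (insert j I) (\<lambda>_. UNIV)"
    proof
      show "R (insert j I) ` C \<subseteq> PiE (insert j I) (\<lambda>_. UNIV)"
      proof (rule image_subsetI)
        fix c assume "c \<in> C"
        show "R (insert j I) c \<in> PiE (insert j I) (\<lambda>_. UNIV)"
          unfolding R_def by (rule restrict_PiE[THEN iffD2]) auto
      qed
      show "PiE (insert j I) (\<lambda>_. UNIV) \<subseteq> R (insert j I) ` C"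
      proof
        fix g :: "nat \<Rightarrow> 'a" assume g: "g \<in> PiE (insert j I) (\<lambda>_. UNIV)"
        have "restrict g I \<in> PiE I (\<lambda>_. UNIV)" by simp
        then obtain c0 where c0: "c0 \<in> C" "R I c0 = restrict g I" using Isurj by (metis imageE)
        have c0I: "\<And>i. i \<in> I \<Longrightarrow> c0 ! i = g i" using c0(2) unfolding R_def by (metis restrict_apply')
        define lam where "lam = (g j - c0 ! j) / v ! j"
        define w where "w = map2 (+) c0 (map ((*) lam) v)"
        have wC: "w \<in> C" unfolding w_def using add smul c0 vC by blast
        have wnth: "\<And>i. i < n \<Longrightarrow> w ! i = c0 ! i + lam * v ! i" using Cn c0 lv unfolding w_def by simp
        have "R (insert j I) w = g"
        proof
          fix i
          show "R (insert j I) w i = g i"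
          proof (cases "i \<in> insert j I")
            case True
            then have "i < n" using j Isub by auto
            show ?thesis
            proof (cases "i = j")
              case True
              then show ?thesis using wnth[OF \<open>i < n\<close>] vj unfolding R_def lam_def by simp
            next
              case False
              then have "i \<in> I" using \<open>i \<in> insert j I\<close> by simp
              then show ?thesis using wnth[OF \<open>i < n\<close>] v0 c0I unfolding R_def by simp
            qed
          next
            case False
            then show ?thesis using g unfolding R_def by (simp add: PiE_iff extensional_def)
          qed
        qed
        then show "g \<in> R (insert j I) ` C" using wC by blast
      qed
    qed
    then have "insert j I \<in> F" unfolding F_def using Isub j by auto
    then have "card (insert j I) \<le> card I" by (rule maxI)
    then show False using finI j by simp
  qed
  have inj: "inj_on (R I) C"
  proof (rule inj_onI)
    fix c c' assume cc: "c \<in> C" "c' \<in> C" "R I c = R I c'"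
    show "c = c'"
    proof (rule nth_equalityI)
      show "length c = length c'" using Cn cc by simp
      fix i assume "i < length c"
      then have i: "i < n" using Cn cc by simp
      show "c ! i = c' ! i"
      proof (cases "i \<in> I")
        case True then show ?thesis using cc(3) unfolding R_def by (metis restrict_apply')
      next
        case False then show ?thesis using det[OF i False cc] by simp
      qed
    qed
  qed
  have "card C = card (PiE I (\<lambda>_. UNIV :: 'a set))" using card_image[OF inj] Isurj by simp
  also have "\<dots> = q ^ card I" using finI unfolding q_def by (simp add: card_PiE)
  finally have "q ^ k = q ^ card I" using cardC by simp
  then have "card I = k" using q2 power_inject_exp[of q] by simp
  then show ?thesis using Isub inj unfolding R_def by blast
qed

lemma systematic:
  fixes C :: "('a::{finite,field}) list set"
  assumes lin: "linear_code n k d C"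
  shows "k \<le> n \<and> (\<exists>par :: 'a list \<Rightarrow> 'a list. \<forall>u\<in>vectors k. length (par u) = n - k \<and>
           (\<forall>u'\<in>vectors k. u \<noteq> u' \<longrightarrow> hamming (u @ par u) (u' @ par u') \<ge> d))"
proof -
  obtain I where Isub: "I \<subseteq> {..<n}" and cI: "card I = k" and inj: "inj_on (\<lambda>c. restrict ((!) c) I) C"
    using info_set[OF lin] by blast
  have Cn: "\<And>c. c \<in> C \<Longrightarrow> length c = n" using lin unfolding linear_code_def vectors_def by auto
  have cardC: "card C = card (UNIV :: 'a set) ^ k" using lin unfolding linear_code_def by blast
  have mind: "\<And>x y. x \<in> C \<Longrightarrow> y \<in> C \<Longrightarrow> x \<noteq> y \<Longrightarrow> hamming x y \<ge> d"
    using lin unfolding linear_code_def by blast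
  have finI: "finite I" using Isub finite_subset by blast
  have kn: "k \<le> n" using card_mono[OF _ Isub] cI by simp
  define LI where "LI = sorted_list_of_set I"
  define LJ where "LJ = sorted_list_of_set ({..<n} - I)"
  have sLI: "set LI = I" "distinct LI" "length LI = k" using finI cI unfolding LI_def by auto
  have sLJ: "set LJ = {..<n} - I" "distinct LJ" "length LJ = n - k"
    unfolding LJ_def using card_Diff_subset[OF finI Isub] cI by auto
  have dL: "distinct (LI @ LJ)" using sLI sLJ by auto
  have setL: "set (LI @ LJ) = {..<n}" using sLI sLJ Isub by auto
  define enc where "enc c = map ((!) c) LI" for c :: "'a list"
  have injE: "inj_on enc C"
  proof (rule inj_onI)
    fix c c' assume cc: "c \<in> C" "c' \<in> C" "enc c = enc c'"
    then have "\<forall>i\<in>set LI. c ! i = c' ! i" unfolding enc_def by (simp add: map_eq_conv)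
    then have "restrict ((!) c) I = restrict ((!) c') I" using sLI by (intro restrict_ext) auto
    then have "(\<lambda>c. restrict ((!) c) I) c = (\<lambda>c. restrict ((!) c) I) c'" by simp
    then show "c = c'" using inj_onD[OF inj _ cc(1) cc(2)] by blast
  qed
  have Esub: "enc ` C \<subseteq> vectors k" unfolding enc_def vectors_def using sLI by auto
  have "card (enc ` C) = card (vectors k :: 'a list set)"
    using card_image[OF injE] cardC card_vectors[where 'a='a] by simp
  then have Eeq: "enc ` C = vectors k" using Esub finite_vectors by (intro card_subset_eq) auto
  define cw where "cw u = inv_into C enc u" for u :: "'a list"
  have cwC: "cw u \<in> C" if "u \<in> vectors k" for u
    unfolding cw_def by (rule inv_into_into) (use that Eeq in simp)
  have cwE: "enc (cw u) = u" if "u \<in> vectors k" for u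
    unfolding cw_def by (rule f_inv_into_f) (use that Eeq in simp)
  define par where "par u = map ((!) (cw u)) LJ" for u :: "'a list"
  have cat: "u @ par u = map ((!) (cw u)) (LI @ LJ)" if "u \<in> vectors k" for u
  proof -
    have "u = map ((!) (cw u)) LI" using cwE[OF that] unfolding enc_def by simp
    then show ?thesis unfolding par_def by simp
  qed
  have "\<forall>u\<in>vectors k. length (par u) = n - k \<and>
           (\<forall>u'\<in>vectors k. u \<noteq> u' \<longrightarrow> hamming (u @ par u) (u' @ par u') \<ge> d)"
  proof (intro ballI conjI impI)
    fix u :: "'a list" assume u: "u \<in> vectors k"
    show "length (par u) = n - k" unfolding par_def using sLJ by simp
    fix u' :: "'a list" assume u': "u' \<in> vectors k" and ne: "u \<noteq> u'"
    have "cw u \<noteq> cw u'"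
    proof
      assume "cw u = cw u'"
      then have "enc (cw u) = enc (cw u')" by simp
      then show False using cwE[OF u] cwE[OF u'] ne by simp
    qed
    then have "hamming (cw u) (cw u') \<ge> d" using mind cwC u u' by blast
    moreover have "hamming (u @ par u) (u' @ par u') = hamming (cw u) (cw u')"
      unfolding cat[OF u] cat[OF u'] using hamming_map_perm[OF dL setL Cn[OF cwC[OF u]] Cn[OF cwC[OF u']]] .
    ultimately show "hamming (u @ par u) (u' @ par u') \<ge> d" by simp
  qed
  then have "\<exists>par :: 'a list \<Rightarrow> 'a list. \<forall>u\<in>vectors k. length (par u) = n - k \<and>
           (\<forall>u'\<in>vectors k. u \<noteq> u' \<longrightarrow> hamming (u @ par u) (u' @ par u') \<ge> d)" by (rule exI[of _ par])
  with kn show ?thesis by (rule conjI)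
qed

lemma edge_color:
  fixes f :: "('a::finite) list \<Rightarrow> 'b"
  assumes lb: "locally_binary k f d"
    and v: "v \<in> vectors k" and w: "w \<in> vectors k" and h: "hamming v w \<le> d" and ne: "f v \<noteq> f w"
  shows "(f v = (SOME x. x \<in> fball k f v d)) \<noteq> (f w = (SOME x. x \<in> fball k f w d))"
proof -
  have fin: "finite (fball k f u d)" for u
    by (rule finite_subset[of _ "f ` vectors k"]) (auto simp: fball_def finite_vectors)
  have T: "fball k f a d = {f a, f b}" if a: "a \<in> vectors k" and b: "b \<in> vectors k"
     and hab: "hamming a b \<le> d" and nab: "f a \<noteq> f b" for a b
  proof -
    have sub: "{f a, f b} \<subseteq> fball k f a d" unfolding fball_def using a b hab by force
    have "card (fball k f a d) \<le> 2" using lb a unfolding locally_binary_def by blast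
    then have "card (fball k f a d) \<le> card {f a, f b}" using nab by simp
    then show ?thesis using card_seteq[OF fin sub] by simp
  qed
  have Tv: "fball k f v d = {f v, f w}" using T[OF v w h ne] .
  have Tw: "fball k f w d = {f v, f w}" using T[OF w v _ ne[symmetric]] h by (auto simp: hamming_sym)
  have "(SOME x. x \<in> {f v, f w}) \<in> {f v, f w}" by (rule someI_ex) auto
  then show ?thesis unfolding Tv Tw using ne by auto
qed

theorem corollary8:
  fixes f :: "('a::{finite,field}) list \<Rightarrow> 'b"
    and k n t\<^sub>d d\<^sub>d :: nat
  assumes "d\<^sub>d = 2 * t\<^sub>d + 1"
    and "locally_binary k f d\<^sub>d"
    and "card (f ` vectors k) \<ge> 2"
    and "\<exists>C :: 'a list set. perfect_linear_code n k d\<^sub>d C"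
  shows "min_redundancy TYPE('a) k f d\<^sub>d (d\<^sub>d + 1) = n - k + 1"
proof -
  note dd = assms(1) and lb = assms(2) and nc = assms(3)
  obtain C :: "'a list set" where pc: "perfect_linear_code n k d\<^sub>d C" using assms(4) by blast
  have lin: "linear_code n k d\<^sub>d C" using pc unfolding perfect_linear_code_def by blast
  have Vn: "V (card (UNIV :: 'a set)) n t\<^sub>d = card (UNIV :: 'a set) ^ (n - k)"
    using pc dd unfolding perfect_linear_code_def V_sum by simp
  obtain par :: "'a list \<Rightarrow> 'a list" where kn: "k \<le> n" and par: "\<forall>u\<in>vectors k. length (par u) = n - k \<and>
           (\<forall>u'\<in>vectors k. u \<noteq> u' \<longrightarrow> hamming (u @ par u) (u' @ par u') \<ge> d\<^sub>d)"
    using systematic[OF lin] by blast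
  define b where "b u = (f u = (SOME x. x \<in> fball k f u d\<^sub>d))" for u :: "'a list"
  define p where "p u = par u @ [if b u then (1::'a) else 0]" for u :: "'a list"
  have fcc: "is_FCC k f d\<^sub>d (d\<^sub>d + 1) (n - k + 1) p"
    unfolding is_FCC_def
  proof (intro conjI ballI)
    fix u :: "'a list" assume "u \<in> vectors k"
    then show "length (p u) = n - k + 1" using par unfolding p_def by simp
  next
    fix u1 u2 :: "'a list" assume u1: "u1 \<in> vectors k" and u2: "u2 \<in> vectors k"
    have l1: "length (u1 @ par u1) = length (u2 @ par u2)" using par u1 u2 by (simp add: vectors_def)
    have H: "hamming (u1 @ p u1) (u2 @ p u2) = hamming (u1 @ par u1) (u2 @ par u2) + (if b u1 = b u2 then 0 else 1)"
      unfolding p_def using hamming_append[OF l1, of "[if b u1 then 1 else 0]" "[if b u2 then 1 else 0]"]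
      by (simp add: hamming_Cons)
    have lu: "length u1 = length u2" using u1 u2 by (simp add: vectors_def)
    have Hu: "hamming u1 u2 \<le> hamming (u1 @ par u1) (u2 @ par u2)" using hamming_append[OF lu] by simp
    show "u1 \<noteq> u2 \<longrightarrow> hamming (u1 @ p u1) (u2 @ p u2) \<ge> d\<^sub>d"
    proof
      assume "u1 \<noteq> u2"
      then have "hamming (u1 @ par u1) (u2 @ par u2) \<ge> d\<^sub>d" using par u1 u2 by blast
      then show "hamming (u1 @ p u1) (u2 @ p u2) \<ge> d\<^sub>d" unfolding H by simp
    qed
    show "f u1 \<noteq> f u2 \<longrightarrow> hamming (u1 @ p u1) (u2 @ p u2) \<ge> d\<^sub>d + 1"
    proof
      assume ne: "f u1 \<noteq> f u2"
      then have "u1 \<noteq> u2" by blast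
      then have ge: "hamming (u1 @ par u1) (u2 @ par u2) \<ge> d\<^sub>d" using par u1 u2 by blast
      show "hamming (u1 @ p u1) (u2 @ p u2) \<ge> d\<^sub>d + 1"
      proof (cases "hamming (u1 @ par u1) (u2 @ par u2) \<ge> d\<^sub>d + 1")
        case True then show ?thesis using H by simp
      next
        case False
        then have hle: "hamming u1 u2 \<le> d\<^sub>d" using Hu by simp
        have "b u1 \<noteq> b u2" unfolding b_def by (rule edge_color[OF lb u1 u2 hle ne])
        then show ?thesis using H ge by simp
      qed
    qed
  qed
  have low: "n - k + 1 \<le> r" if "is_FCC k f d\<^sub>d (d\<^sub>d + 1) r p'" for r and p' :: "'a list \<Rightarrow> 'a list"
  proof (rule ccontr)
    assume "\<not> n - k + 1 \<le> r"
    then have "k + r \<le> n" using kn by simp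
    then show False using lower_bound[OF dd that nc Vn] by blast
  qed
  show ?thesis unfolding min_redundancy_def
  proof (rule Least_equality)
    show "\<exists>p. is_FCC k f d\<^sub>d (d\<^sub>d + 1) (n - k + 1) p" using fcc by blast
    fix r assume "\<exists>p :: 'a list \<Rightarrow> 'a list. is_FCC k f d\<^sub>d (d\<^sub>d + 1) r p"
    then obtain p' :: "'a list \<Rightarrow> 'a list" where "is_FCC k f d\<^sub>d (d\<^sub>d + 1) r p'" by blast
    then show "n - k + 1 \<le> r" by (rule low)
  qed
qed

end
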